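(* Assume there exists a cardinal $\vartheta$ with $\mathbf V_\vartheta\models\mathsf{ZFC}$; let $\vartheta$ be the least such and $V=\mathbf V_\vartheta$. Let $I$, $U$, ${}^\ast V$, ${}^\ast\!\in$, ${}^\ast\!=$, $r(\cdot)$ and $\Phi[\mathbf i]$ be as described in the context. Let $\Phi$ be an internal formula (built from $\in$ and $=$) with parameters in ${}^\ast V$, and let $r\ge r(\Phi)$. Then $\Phi$ is true in $\langle{}^\ast V;{}^\ast\!\in,{}^\ast\!=\rangle$ if and only if $\mathbf U i_r\,\mathbf U i_{r-1}\cdots\mathbf U i_1\,\big(\Phi[i_1,\dots,i_r]\text{ is true in }(V,\in)\big)$.
   Context: $I=\{i\in V: i\text{ finite}\}$. $\mathrm{Def}(V)$ is the collection of subsets of $V$ first-order definable in $(V,\in)$ with parameters from $V$. $U$ is an ultrafilter over $I$ such that (A) $\{i\in I:a\in i\}\in U$ for every $a\in V$, and (B) for every $P\subseteq I\times V$ in $\mathrm{Def}(V)$, $\{x\in V:\{i:\langle i,x\rangle\in P\}\in U\}\in\mathrm{Def}(V)$. Write $\mathbf U i\,\varphi(i)$ for $\{i\in I:\varphi(i)\}\in U$. For $r\in\omega$ let ${}^\ast V_r$ be the set of all functions $f:I^r\to V$ (with $I^0=\{\emptyset\}$), and ${}^\ast V=\bigcup_{r\in\omega}{}^\ast V_r$; for $z\in V$ put ${}^\ast z=\{\langle\emptyset,z\rangle\}\in{}^\ast V_0$. For $F\in{}^\ast V$, $r(F)$ is the unique $r$ with $F\in{}^\ast V_r$; for $q\ge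 r(F)$ and $\mathbf i=\langle i_1,\dots,i_q\rangle\in I^q$ put $F[\mathbf i]=F(i_1,\dots,i_{r(F)})$ (so ${}^\ast z[\mathbf i]=z$). For $F,G\in{}^\ast V$ with $r=\max\{r(F),r(G)\}$: $F\,{}^\ast\!\!\in G$ iff $\mathbf U i_r\cdots\mathbf U i_1\,(F[\mathbf i]\in G[\mathbf i])$, and $F\,{}^\ast\!\!=G$ iff $\mathbf U i_r\cdots\mathbf U i_1\,(F[\mathbf i]=G[\mathbf i])$, where $\mathbf i=\langle i_1,\dots,i_r\rangle$. For a formula $\Phi$ with parameters in ${}^\ast V$, $r(\Phi)=\max\{r(F):F\text{ occurs in }\Phi\}$, and for $r\ge r(\Phi)$, $\mathbf i\in I^r$, $\Phi[\mathbf i]$ is obtained by replacing each parameter $F$ by $F[\mathbf i]$ (a formula with parameters in $V$). *)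

theory Defs
  imports Main
begin

datatype 'p tm = Var nat | Par 'p

datatype 'p fm =
    Mem "'p tm" "'p tm"
  | Eq "'p tm" "'p tm"
  | Neg "'p fm"
  | Conj "'p fm" "'p fm"
  | Ex nat "'p fm"

fun tval :: "(nat \<Rightarrow> 'd) \<Rightarrow> 'd tm \<Rightarrow> 'd" where
  "tval e (Var n) = e n"
| "tval e (Par p) = p"

fun sat :: "'d set \<Rightarrow> ('d \<Rightarrow> 'd \<Rightarrow> bool) \<Rightarrow> ('d \<Rightarrow> 'd \<Rightarrow> bool)
             \<Rightarrow> (nat \<Rightarrow> 'd) \<Rightarrow> 'd fm \<Rightarrow> bool" where
  "sat D m q e (Mem s t) = m (tval e s) (tval e t)"
| "sat D m q e (Eq s t) = q (tval e s) (tval e t)"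
| "sat D m q e (Neg \<phi>) = (\<not> sat D m q e \<phi>)"
| "sat D m q e (Conj \<phi> \<psi>) = (sat D m q e \<phi> \<and> sat D m q e \<psi>)"
| "sat D m q e (Ex n \<phi>) = (\<exists>x\<in>D. sat D m q (e(n := x)) \<phi>)"

fun fv_tm :: "'p tm \<Rightarrow> nat set" where
  "fv_tm (Var n) = {n}"
| "fv_tm (Par p) = {}"

fun fv :: "'p fm \<Rightarrow> nat set" where
  "fv (Mem s t) = fv_tm s \<union> fv_tm t"
| "fv (Eq s t) = fv_tm s \<union> fv_tm t"
| "fv (Neg \<phi>) = fv \<phi>"
| "fv (Conj \<phi> \<psi>) = fv \<phi> \<union> fv \<psi>"
| "fv (Ex n \<phi>) = fv \<phi> - {n}"

text \<open>I = set of elements of V that are finite (finiteness is absolute for V_theta).\<close>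
definition finV :: "('v \<Rightarrow> 'v \<Rightarrow> bool) \<Rightarrow> 'v set" where
  "finV mem = {i. finite {a. mem a i}}"

definition Defbl :: "('v \<Rightarrow> 'v \<Rightarrow> bool) \<Rightarrow> 'v set \<Rightarrow> bool" where
  "Defbl mem X \<longleftrightarrow> (\<exists>(\<phi>::'v fm) e n. X = {x. sat UNIV mem (=) (e(n := x)) \<phi>})"

definition is_pair :: "('v \<Rightarrow> 'v \<Rightarrow> bool) \<Rightarrow> 'v \<Rightarrow> 'v \<Rightarrow> 'v \<Rightarrow> bool" where
  "is_pair mem z a b \<longleftrightarrow>
     (\<forall>w. mem w z \<longleftrightarrow> ((\<forall>u. mem u w \<longleftrightarrow> u = a) \<or> (\<forall>u. mem u w \<longleftrightarrow> u = a \<or> u = b)))"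

definition ultrafilter_on :: "'a set \<Rightarrow> 'a set set \<Rightarrow> bool" where
  "ultrafilter_on I U \<longleftrightarrow>
     U \<subseteq> Pow I \<and> I \<in> U \<and> {} \<notin> U \<and>
     (\<forall>A B. A \<in> U \<and> B \<in> U \<longrightarrow> A \<inter> B \<in> U) \<and>
     (\<forall>A B. A \<in> U \<and> A \<subseteq> B \<and> B \<subseteq> I \<longrightarrow> B \<in> U) \<and>
     (\<forall>A. A \<subseteq> I \<longrightarrow> A \<in> U \<or> I - A \<in> U)"

text \<open>Uq I U r P  means  U i_r U i_(r-1) ... U i_1 P [i_1,...,i_r]
  (outermost quantifier over the last coordinate).\<close>
fun Uq :: "'a set \<Rightarrow> 'a set set \<Rightarrow> nat \<Rightarrow> ('a list \<Rightarrow> bool) \<Rightarrow> bool" where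
  "Uq I U 0 P = P []"
| "Uq I U (Suc n) P = ({j \<in> I. Uq I U n (\<lambda>is. P (is @ [j]))} \<in> U)"

text \<open>An element F of *V_r (a function I^r \<rightarrow> V) is represented as (r, f) where
  f is defined on lists of length r with entries in I and is undefined elsewhere.\<close>
type_synonym 'v star = "nat \<times> ('v list \<Rightarrow> 'v)"

definition starV :: "'v set \<Rightarrow> 'v star set" where
  "starV I = {(r, f). \<forall>is. \<not> (length is = r \<and> set is \<subseteq> I) \<longrightarrow> f is = undefined}"

definition star_const :: "'v \<Rightarrow> 'v star" where
  "star_const z = (0, \<lambda>is. if is = [] then z else undefined)"

definition app :: "'v star \<Rightarrow> 'v list \<Rightarrow> 'v" where
  "app F is = snd F (take (fst F) is)"

definition starmem :: "('v \<Rightarrow> 'v \<Rightarrow> bool) \<Rightarrow> 'v set \<Rightarrow> 'v set set \<Rightarrow> 'v star \<Rightarrow> 'v star \<Rightarrow> bool" where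
  "starmem mem I U F G = Uq I U (max (fst F) (fst G)) (\<lambda>is. mem (app F is) (app G is))"

definition stareq :: "'v set \<Rightarrow> 'v set set \<Rightarrow> 'v star \<Rightarrow> 'v star \<Rightarrow> bool" where
  "stareq I U F G = Uq I U (max (fst F) (fst G)) (\<lambda>is. app F is = app G is)"

definition rk :: "'v star fm \<Rightarrow> nat" where
  "rk \<Phi> = Max (insert 0 (fst ` set_fm \<Phi>))"

definition inst :: "'v star fm \<Rightarrow> 'v list \<Rightarrow> 'v fm" where
  "inst \<Phi> is = map_fm (\<lambda>F. app F is) \<Phi>"

end

theory Submission
  imports Defs
begin

lemma Uq_mono:
  assumes ul: "ultrafilter_on I U"
  shows "(\<And>is. length is = n \<Longrightarrow> set is \<subseteq> I \<Longrightarrow> P is \<Longrightarrow> Q is) \<Longrightarrow> Uq I U n P \<Longrightarrow> Uq I U n Q"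
proof (induction n arbitrary: P Q)
  case 0
  then show ?case by simp
next
  case (Suc n)
  have sub: "{j \<in> I. Uq I U n (\<lambda>is. P (is @ [j]))} \<subseteq> {j \<in> I. Uq I U n (\<lambda>is. Q (is @ [j]))}"
  proof
    fix j assume "j \<in> {j \<in> I. Uq I U n (\<lambda>is. P (is @ [j]))}"
    then have j: "j \<in> I" "Uq I U n (\<lambda>is. P (is @ [j]))" by auto
    have "Uq I U n (\<lambda>is. Q (is @ [j]))"
      by (rule Suc.IH[OF _ j(2)]) (use Suc.prems(1) j(1) in auto)
    then show "j \<in> {j \<in> I. Uq I U n (\<lambda>is. Q (is @ [j]))}" using j by auto
  qed
  show ?case using Suc.prems(2) sub ul unfolding ultrafilter_on_def by auto
qed

lemma Uq_cong:
  assumes ul: "ultrafilter_on I U"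
    and "\<And>is. length is = n \<Longrightarrow> set is \<subseteq> I \<Longrightarrow> P is = Q is"
  shows "Uq I U n P = Uq I U n Q"
  using Uq_mono[OF ul, of n P Q] Uq_mono[OF ul, of n Q P] assms(2) by blast

lemma Uq_neg:
  assumes ul: "ultrafilter_on I U"
  shows "Uq I U n (\<lambda>is. \<not> P is) = (\<not> Uq I U n P)"
proof (induction n arbitrary: P)
  case 0
  then show ?case by simp
next
  case (Suc n)
  let ?A = "{j \<in> I. Uq I U n (\<lambda>is. P (is @ [j]))}"
  have "{j \<in> I. Uq I U n (\<lambda>is. \<not> P (is @ [j]))} = I - ?A"
    using Suc.IH by auto
  moreover have "(I - ?A \<in> U) = (?A \<notin> U)"
  proof
    assume "I - ?A \<in> U"
    then show "?A \<notin> U" using ul unfolding ultrafilter_on_def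
      by (metis Diff_disjoint inf_commute)
  next
    assume "?A \<notin> U"
    moreover have "?A \<subseteq> I" by auto
    ultimately show "I - ?A \<in> U" using ul unfolding ultrafilter_on_def by blast
  qed
  ultimately show ?case by simp
qed

lemma Uq_conj:
  assumes ul: "ultrafilter_on I U"
  shows "Uq I U n (\<lambda>is. P is \<and> Q is) = (Uq I U n P \<and> Uq I U n Q)"
proof (induction n arbitrary: P Q)
  case 0
  then show ?case by simp
next
  case (Suc n)
  have "{j \<in> I. Uq I U n (\<lambda>is. P (is @ [j]) \<and> Q (is @ [j]))} =
     {j \<in> I. Uq I U n (\<lambda>is. P (is @ [j]))} \<inter> {j \<in> I. Uq I U n (\<lambda>is. Q (is @ [j]))}"
    using Suc.IH by auto
  moreover have "\<And>A B. A \<subseteq> I \<Longrightarrow> B \<subseteq> I \<Longrightarrow> (A \<inter> B \<in> U) = (A \<in> U \<and> B \<in> U)"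
    using ul unfolding ultrafilter_on_def by (metis Int_lower1 Int_lower2 order_trans)
  ultimately show ?case by simp
qed

lemma Uq_const:
  assumes ul: "ultrafilter_on I U"
  shows "Uq I U n (\<lambda>_. c) = c"
proof (induction n)
  case 0
  then show ?case by simp
next
  case (Suc n)
  then show ?case using ul unfolding ultrafilter_on_def by (cases c) auto
qed

lemma Uq_append:
  "Uq I U (a + b) P = Uq I U b (\<lambda>js. Uq I U a (\<lambda>is. P (is @ js)))"
proof (induction b arbitrary: P)
  case 0
  then show ?case by simp
next
  case (Suc b)
  show ?case by (simp add: Suc.IH)
qed

lemma Uq_lower:
  assumes ul: "ultrafilter_on I U"
    and inv: "\<And>is. Q is = Q (take r is)"
    and le: "r \<le> r'"
  shows "Uq I U r' Q = Uq I U r Q"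
proof -
  have "r' = r + (r' - r)" using le by simp
  then have "Uq I U r' Q = Uq I U (r' - r) (\<lambda>js. Uq I U r (\<lambda>is. Q (is @ js)))"
    by (metis Uq_append)
  also have "\<dots> = Uq I U (r' - r) (\<lambda>js. Uq I U r Q)"
  proof -
    have "\<And>js. Uq I U r (\<lambda>is. Q (is @ js)) = Uq I U r Q"
      by (rule Uq_cong[OF ul]) (metis inv append_eq_conv_conj)
    then show ?thesis by simp
  qed
  also have "\<dots> = Uq I U r Q" by (rule Uq_const[OF ul])
  finally show ?thesis .
qed

lemma app_take: "fst F \<le> r \<Longrightarrow> app F (take r is) = app F is"
  unfolding app_def by (simp add: min_absorb1)

lemma tval_inst: "tval (\<lambda>m. app (e m) is) (map_tm (\<lambda>F. app F is) s) = app (tval e s) is"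
  by (cases s) auto

lemma fv_tm_map: "fv_tm (map_tm f t) = fv_tm t"
  by (cases t) auto

lemma fv_map: "fv (map_fm f \<phi>) = fv \<phi>"
  by (induction \<phi>) (auto simp: fv_tm_map)

lemma tval_fv: "(\<forall>n\<in>fv_tm t. e1 n = e2 n) \<Longrightarrow> tval e1 t = tval e2 t"
  by (cases t) auto

lemma sat_fv: "(\<forall>n\<in>fv \<phi>. e1 n = e2 n) \<Longrightarrow> sat D m q e1 \<phi> = sat D m q e2 \<phi>"
proof (induction \<phi> arbitrary: e1 e2)
  case (Mem s t)
  then show ?case using tval_fv[of s e1 e2] tval_fv[of t e1 e2] by auto
next
  case (Eq s t)
  then show ?case using tval_fv[of s e1 e2] tval_fv[of t e1 e2] by auto
next
  case (Ex n \<phi>)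
  have "\<And>x. sat D m q (e1(n := x)) \<phi> = sat D m q (e2(n := x)) \<phi>"
    by (rule Ex.IH) (use Ex.prems in auto)
  then show ?case by simp
next
  case (Conj \<phi> \<psi>)
  have "sat D m q e1 \<phi> = sat D m q e2 \<phi>" by (rule Conj.IH(1)) (use Conj.prems in auto)
  moreover have "sat D m q e1 \<psi> = sat D m q e2 \<psi>" by (rule Conj.IH(2)) (use Conj.prems in auto)
  ultimately show ?case by simp
qed auto

lemma finite_set_fm: "finite (set_fm \<phi>)"
proof -
  have t: "finite (set_tm t)" for t :: "'a tm" by (cases t) auto
  show ?thesis by (induction \<phi>) (auto simp: t)
qed

lemma main:
  assumes ul: "ultrafilter_on I U"
  shows "(\<forall>F\<in>set_fm \<phi>. fst F \<le> r) \<Longrightarrow> (\<forall>m. fst (e m) \<le> r) \<Longrightarrow>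
    sat (starV I) (starmem mem I U) (stareq I U) e \<phi> =
    Uq I U r (\<lambda>is. sat UNIV mem (=) (\<lambda>m. app (e m) is) (inst \<phi> is))"
proof (induction \<phi> arbitrary: e r)
  case (Mem s t)
  let ?F = "tval e s" and ?G = "tval e t"
  have rF: "fst ?F \<le> r" using Mem.prems by (cases s) auto
  have rG: "fst ?G \<le> r" using Mem.prems by (cases t) auto
  let ?m = "max (fst ?F) (fst ?G)"
  have "Uq I U r (\<lambda>is. mem (app ?F is) (app ?G is)) = Uq I U ?m (\<lambda>is. mem (app ?F is) (app ?G is))"
    by (rule Uq_lower[OF ul]) (use rF rG in \<open>simp_all add: app_take\<close>)
  then show ?case by (simp add: inst_def starmem_def tval_inst)
next
  case (Eq s t)
  let ?F = "tval e s" and ?G = "tval e t"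
  have rF: "fst ?F \<le> r" using Eq.prems by (cases s) auto
  have rG: "fst ?G \<le> r" using Eq.prems by (cases t) auto
  let ?m = "max (fst ?F) (fst ?G)"
  have "Uq I U r (\<lambda>is. app ?F is = app ?G is) = Uq I U ?m (\<lambda>is. app ?F is = app ?G is)"
    by (rule Uq_lower[OF ul]) (use rF rG in \<open>simp_all add: app_take\<close>)
  then show ?case by (simp add: inst_def stareq_def tval_inst)
next
  case (Neg \<phi>)
  then show ?case by (simp add: inst_def Uq_neg[OF ul])
next
  case (Conj \<phi> \<psi>)
  have "sat (starV I) (starmem mem I U) (stareq I U) e \<phi> = Uq I U r (\<lambda>is. sat UNIV mem (=) (\<lambda>m. app (e m) is) (inst \<phi> is))"
    by (rule Conj.IH(1)) (use Conj.prems in auto)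
  moreover have "sat (starV I) (starmem mem I U) (stareq I U) e \<psi> = Uq I U r (\<lambda>is. sat UNIV mem (=) (\<lambda>m. app (e m) is) (inst \<psi> is))"
    by (rule Conj.IH(2)) (use Conj.prems in auto)
  ultimately show ?case by (simp add: inst_def Uq_conj[OF ul])
next
  case (Ex n \<psi>)
  let ?env = "\<lambda>is. (\<lambda>m. app (e m) is)"
  let ?Q = "\<lambda>is. \<exists>x. sat UNIV mem (=) ((?env is)(n := x)) (inst \<psi> is)"
  have R: "Uq I U r (\<lambda>is. sat UNIV mem (=) (?env is) (inst (Ex n \<psi>) is)) = Uq I U r ?Q"
    by (simp add: inst_def)
  show ?case unfolding R
  proof
    assume "sat (starV I) (starmem mem I U) (stareq I U) e (fm.Ex n \<psi>)"
    then obtain F where F: "F \<in> starV I" and sF: "sat (starV I) (starmem mem I U) (stareq I U) (e(n := F)) \<psi>"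
      by auto
    define r' where "r' = max r (fst F)"
    have "Uq I U r' (\<lambda>is. sat UNIV mem (=) (\<lambda>m. app ((e(n := F)) m) is) (inst \<psi> is))"
    proof -
      have "\<forall>Fa\<in>set_fm \<psi>. fst Fa \<le> r'" using Ex.prems(1) unfolding r'_def by force
      moreover have "\<forall>m. fst ((e(n := F)) m) \<le> r'" using Ex.prems(2) unfolding r'_def by (simp add: le_max_iff_disj)
      ultimately have "sat (starV I) (starmem mem I U) (stareq I U) (e(n := F)) \<psi> = Uq I U r' (\<lambda>is. sat UNIV mem (=) (\<lambda>m. app ((e(n := F)) m) is) (inst \<psi> is))"
        by (rule Ex.IH)
      then show ?thesis using sF by (simp only:)
    qed
    then have "Uq I U r' ?Q"
    proof (rule Uq_mono[OF ul, rotated])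
      fix "is" :: "'a list"
      assume h: "sat UNIV mem (=) (\<lambda>m. app ((e(n := F)) m) is) (inst \<psi> is)"
      have "(\<lambda>m. app ((e(n := F)) m) is) = (?env is)(n := app F is)" by auto
      then show "?Q is" using h by auto
    qed
    moreover have "Uq I U r' ?Q = Uq I U r ?Q"
    proof (rule Uq_lower[OF ul])
      fix "is" :: "'a list"
      have e1: "?env (take r is) = ?env is" using Ex.prems app_take by metis
      have "inst \<psi> (take r is) = inst \<psi> is"
        unfolding inst_def by (rule fm.map_cong0) (use Ex.prems in \<open>auto intro: app_take\<close>)
      then show "?Q is = ?Q (take r is)" using e1 by simp
    qed (simp add: r'_def)
    ultimately show "Uq I U r ?Q" by simp
  next
    assume Q: "Uq I U r ?Q"
    define F where "F = (r, \<lambda>is. if length is = r \<and> set is \<subseteq> I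
       then (SOME x. sat UNIV mem (=) ((?env is)(n := x)) (inst \<psi> is)) else undefined)"
    have FV: "F \<in> starV I" unfolding F_def starV_def by auto
    have "Uq I U r (\<lambda>is. sat UNIV mem (=) (\<lambda>m. app ((e(n := F)) m) is) (inst \<psi> is))"
    proof (rule Uq_mono[OF ul _ Q])
      fix "is" :: "'a list"
      assume l: "length is = r" "set is \<subseteq> I" and q: "?Q is"
      have aF: "app F is = (SOME x. sat UNIV mem (=) ((?env is)(n := x)) (inst \<psi> is))"
        unfolding app_def F_def using l by simp
      have "(\<lambda>m. app ((e(n := F)) m) is) = (?env is)(n := app F is)" by auto
      then show "sat UNIV mem (=) (\<lambda>m. app ((e(n := F)) m) is) (inst \<psi> is)"
        using someI_ex[OF q] aF by simp
    qed
    then have "sat (starV I) (starmem mem I U) (stareq I U) (e(n := F)) \<psi>"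
    proof -
      have a1: "\<forall>Fa\<in>set_fm \<psi>. fst Fa \<le> r" using Ex.prems(1) by force
      have a2: "\<forall>m. fst ((e(n := F)) m) \<le> r" using Ex.prems(2) by (simp add: F_def)
      have "sat (starV I) (starmem mem I U) (stareq I U) (e(n := F)) \<psi> = Uq I U r (\<lambda>is. sat UNIV mem (=) (\<lambda>m. app ((e(n := F)) m) is) (inst \<psi> is))"
        by (rule Ex.IH[OF a1 a2])
      then show ?thesis using \<open>Uq I U r (\<lambda>is. sat UNIV mem (=) (\<lambda>m. app ((e(n := F)) m) is) (inst \<psi> is))\<close> by (simp only:)
    qed
    then show "sat (starV I) (starmem mem I U) (stareq I U) e (fm.Ex n \<psi>)"
      using FV by auto
  qed
qed

theorem lemma6:
  fixes mem :: "'v \<Rightarrow> 'v \<Rightarrow> bool"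
    and U :: "'v set set"
    and \<Phi> :: "'v star fm"
    and r :: nat
  assumes extensional: "\<And>a b. (\<forall>x. mem x a \<longleftrightarrow> mem x b) \<Longrightarrow> a = b"
    and wellfounded: "wf {(a, b). mem a b}"
    and ultra: "ultrafilter_on (finV mem) U"
    and condA: "\<And>a. {i \<in> finV mem. mem a i} \<in> U"
    and condB: "\<And>P. Defbl mem P \<Longrightarrow> (\<forall>z\<in>P. \<exists>i\<in>finV mem. \<exists>x. is_pair mem z i x) \<Longrightarrow>
                  Defbl mem {x. {i \<in> finV mem. \<exists>z\<in>P. is_pair mem z i x} \<in> U}"
    and params: "set_fm \<Phi> \<subseteq> starV (finV mem)"
    and sentence: "fv \<Phi> = {}"
    and r_ge: "r \<ge> rk \<Phi>"
  shows "sat (starV (finV mem)) (starmem mem (finV mem) U) (stareq (finV mem) U) e \<Phi>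
     \<longleftrightarrow> Uq (finV mem) U r (\<lambda>is. sat UNIV mem (=) e' (inst \<Phi> is))"
proof -
  define e0 :: "nat \<Rightarrow> 'v star" where "e0 = (\<lambda>_. star_const undefined)"
  have rk: "\<forall>F\<in>set_fm \<Phi>. fst F \<le> r"
  proof
    fix F assume "F \<in> set_fm \<Phi>"
    then have "fst F \<le> rk \<Phi>" unfolding rk_def
      by (intro Max_ge) (auto simp: finite_set_fm)
    then show "fst F \<le> r" using r_ge by simp
  qed
  have r0: "\<forall>m. fst (e0 m) \<le> r" by (simp add: e0_def star_const_def)
  have "sat (starV (finV mem)) (starmem mem (finV mem) U) (stareq (finV mem) U) e \<Phi>
      = sat (starV (finV mem)) (starmem mem (finV mem) U) (stareq (finV mem) U) e0 \<Phi>"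
    by (rule sat_fv) (simp add: sentence)
  also have "\<dots> = Uq (finV mem) U r (\<lambda>is. sat UNIV mem (=) (\<lambda>m. app (e0 m) is) (inst \<Phi> is))"
    by (rule main[OF ultra rk r0])
  also have "\<dots> = Uq (finV mem) U r (\<lambda>is. sat UNIV mem (=) e' (inst \<Phi> is))"
    by (rule arg_cong[where f = "Uq (finV mem) U r"], rule ext, rule sat_fv)
       (simp add: inst_def fv_map sentence)
  finally show ?thesis .
qed

end
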